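(* Let $q>0$, let $z\in\mathbb{C}$ with $\mathrm{Re}(z)>-1$, and let $\alpha\in\{0,1,2,\ldots\}$. Then $$\zeta_E(z,q)=\sum_{n=0}^{\alpha}\frac{(-1)^n}{(n+q)^{z}}-\frac12\,\frac{(-1)^{\alpha}}{(\alpha+q)^{z}}-\frac12\, z\int_{\alpha}^{\infty}\frac{\overline E_0(-t)}{(t+q)^{z+1}}\,dt .$$
   Context: For $q>0$, the alternating Hurwitz zeta function is $\zeta_E(z,q)=\sum_{n=0}^\infty (-1)^n (n+q)^{-z}$ for $\mathrm{Re}(z)>0$; it extends by analytic continuation to an entire function of $z$, and $\zeta_E(z,q)$ denotes this continuation. $\overline E_0$ is the $0$-th quasi-periodic Euler function: $\overline E_0(t)=1$ for $0\le t<1$ and $\overline E_0(t+1)=-\overline E_0(t)$ for all real $t$; for non-integer $t$ it has the Fourier expansion $\overline E_0(t)=\frac4\pi\sum_{k=0}^\infty\frac{\sin((2k+1)\pi t)}{2k+1}$. *)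

theory Defs
  imports "HOL-Analysis.Analysis"
begin

text \<open>The 0-th quasi-periodic Euler function: equal to 1 on [0,1) and
  satisfying E(t+1) = - E(t); explicitly E(t) = (-1)^floor(t).\<close>
definition E0bar :: "real \<Rightarrow> real" where
  "E0bar t = (if even \<lfloor>t\<rfloor> then 1 else -1)"

definition zetaE :: "complex \<Rightarrow> real \<Rightarrow> complex" where
  "zetaE z q = (THE f. f holomorphic_on UNIV \<and>
      (\<forall>w. Re w > 0 \<longrightarrow>
         (\<lambda>n. (-1) ^ n / (complex_of_real (real n + q)) powr w) sums f w)) z"

end

theory Submission
  imports Defs "HOL-Complex_Analysis.Complex_Analysis"
begin


fun Dk :: "nat \<Rightarrow> real \<Rightarrow> complex \<Rightarrow> complex \<Rightarrow> complex" where
  "Dk 0 q s w = (w + of_real q) powr s"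
| "Dk (Suc K) q s w = Dk K q s w - Dk K q s (w + 1)"

lemma Dk_deriv:
  assumes "Re w > -q"
  shows "((\<lambda>w. Dk K q s w) has_field_derivative s * Dk K q (s-1) w) (at w)"
  using assms
proof (induction K arbitrary: w)
  case 0
  have "w + of_real q \<notin> \<real>\<^sub>\<le>\<^sub>0" using 0 by (auto simp: complex_nonpos_Reals_iff)
  from has_field_derivative_powr[OF this, of s]
  have "((\<lambda>w. (w + of_real q) powr s) has_field_derivative s * (w + of_real q) powr (s - 1)) (at w)"
    using DERIV_shift[of "\<lambda>w. w powr s" _ w "of_real q"] by simp
  then show ?case by simp
next
  case (Suc K)
  have d1: "((\<lambda>w. Dk K q s w) has_field_derivative s * Dk K q (s-1) w) (at w)" using Suc by simp
  have "((\<lambda>w. Dk K q s w) has_field_derivative s * Dk K q (s-1) (w+1)) (at (w+1))" using Suc.IH[of "w+1"] Suc.prems by simp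
  then have d2: "((\<lambda>w. Dk K q s (w+1)) has_field_derivative s * Dk K q (s-1) (w+1)) (at w)"
    using DERIV_shift[of "\<lambda>w. Dk K q s w" _ w 1] by simp
  from DERIV_diff[OF d1 d2] show ?case by (simp add: algebra_simps)
qed

lemma Dk_bound:
  assumes q: "q > 0"
  shows "\<exists>M\<ge>0. \<forall>s x. norm s \<le> R \<longrightarrow> 0 \<le> x \<longrightarrow> norm (Dk K q s (of_real x)) \<le> M * (x+q) powr (Re s - real K)"
proof (induction K arbitrary: R)
  case 0
  have "norm (Dk 0 q s (of_real x)) \<le> 1 * (x+q) powr (Re s - real 0)" if "0 \<le> x" for s x
  proof -
    have "norm ((complex_of_real (x + q)) powr s) = (x+q) powr Re s"
      using that q by (subst norm_powr_real_powr) auto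
    then show ?thesis by simp
  qed
  then show ?case by (intro exI[of _ 1]) auto
next
  case (Suc K)
  from Suc.IH[of "R+1"] obtain M where M: "M \<ge> 0"
    "\<And>s x. norm s \<le> R+1 \<Longrightarrow> 0 \<le> x \<Longrightarrow> norm (Dk K q s (of_real x)) \<le> M * (x+q) powr (Re s - real K)"
    by blast
  define C where "C = (1+1/q) powr (max R 0 + 1 + real K)"
  have C1: "C \<ge> 1" unfolding C_def using q by (intro ge_one_powr_ge_zero) auto
  show ?case
  proof (intro exI[of _ "max R 0 * M * C"] conjI allI impI)
    show "0 \<le> max R 0 * M * C" using M(1) C1 by simp
    fix s :: complex and x :: real assume s: "norm s \<le> R" and x: "0 \<le> x"
    define e where "e = Re s - 1 - real K"
    have eb: "\<bar>e\<bar> \<le> max R 0 + 1 + real K" unfolding e_def using s abs_Re_le_cmod[of s] by linarith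
    let ?B = "max R 0 * M * C * (x+q) powr (Re s - real (Suc K))"
    have key: "norm (s * Dk K q (s-1) w) \<le> ?B"
      if wseg: "w \<in> closed_segment (of_real x) (of_real (x + 1))" for w
    proof -
      obtain y where y: "w = of_real y" "x \<le> y" "y \<le> x+1"
      proof -
        have "\<exists>y. w = of_real y \<and> x \<le> y \<and> y \<le> x+1"
          using wseg unfolding closed_segment_of_real closed_segment_eq_real_ivl by auto
        then show ?thesis using that by blast
      qed
      have "norm (s - 1) \<le> R + 1" using s norm_triangle_ineq4[of s 1] by simp
      from M(2)[OF this, of y] y x
      have n1: "norm (Dk K q (s-1) w) \<le> M * (y+q) powr e" by (simp add: e_def)
      have n2: "(y+q) powr e \<le> C * (x+q) powr e"
      proof (cases "e \<le> 0")
        case True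
        have "(y+q) powr e \<le> (x+q) powr e"
          using True y x q by (intro powr_mono2') auto
        also have "\<dots> \<le> C * (x+q) powr e" using C1 by (simp add: mult_le_cancel_right1)
        finally show ?thesis .
      next
        case False
        have "(y+q) powr e \<le> ((1+1/q) * (x+q)) powr e"
        proof (intro powr_mono2)
          have "(1+1/q) * (x+q) = x + q + x/q + 1" using q by (simp add: field_simps)
          moreover have "x/q \<ge> 0" using x q by simp
          ultimately show "y + q \<le> (1+1/q) * (x+q)" using y by linarith
        qed (use False y x q in auto)
        also have "\<dots> = (1+1/q) powr e * (x+q) powr e" using q x by (simp add: powr_mult)
        also have "(1+1/q) powr e \<le> C" unfolding C_def using eb q by (intro powr_mono) auto
        then have "(1+1/q) powr e * (x+q) powr e \<le> C * (x+q) powr e" by (simp add: mult_right_mono)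
        finally show ?thesis .
      qed
      have "norm (s * Dk K q (s-1) w) = norm s * norm (Dk K q (s-1) w)" by (simp add: norm_mult)
      also have "\<dots> \<le> max R 0 * (M * (C * (x+q) powr e))"
        using n1 n2 s M(1) by (intro mult_mono) (auto intro: order.trans mult_left_mono)
      finally show ?thesis by (simp add: e_def algebra_simps)
    qed
    have "norm (Dk K q s (of_real x) - Dk K q s (of_real (x+1))) \<le> ?B * norm (of_real x - of_real (x+1) :: complex)"
    proof (rule field_differentiable_bound[where f' = "\<lambda>w. s * Dk K q (s-1) w"])
      show "convex (closed_segment (of_real x) (of_real (x + 1) :: complex))" by simp
      show "((\<lambda>w. Dk K q s w) has_field_derivative s * Dk K q (s-1) w) (at w within closed_segment (of_real x) (of_real (x + 1)))"
        if wseg: "w \<in> closed_segment (of_real x) (of_real (x + 1))" for w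
      proof -
        obtain y where y: "w = of_real y" "x \<le> y" "y \<le> x+1"
        proof -
        have "\<exists>y. w = of_real y \<and> x \<le> y \<and> y \<le> x+1"
          using wseg unfolding closed_segment_of_real closed_segment_eq_real_ivl by auto
        then show ?thesis using that by blast
      qed
        then have "Re w > -q" using x q by simp
        from Dk_deriv[OF this] show ?thesis by (rule has_field_derivative_at_within)
      qed
    qed (use key in auto)
    then show "norm (Dk (Suc K) q s (of_real x)) \<le> max R 0 * M * C * (x+q) powr (Re s - real (Suc K))"
      by simp
  qed
qed


lemma alt_psum:
  fixes b :: "nat \<Rightarrow> complex"
  shows "(\<Sum>n<N. (-1)^n * (b n - b (Suc n))) = 2 * (\<Sum>n<N. (-1)^n * b n) + (-1)^N * b N - b 0"
  by (induction N) (auto simp: algebra_simps)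

lemma alt_fwd:
  fixes b :: "nat \<Rightarrow> complex"
  assumes "(\<lambda>n. (-1)^n * b n) sums S"
  shows "(\<lambda>n. (-1)^n * (b n - b (Suc n))) sums (2 * S - b 0)"
proof -
  have t0: "(\<lambda>n. (-1)^n * b n) \<longlonglongrightarrow> 0"
    using assms summable_LIMSEQ_zero sums_summable by blast
  have "(\<lambda>N. 2 * (\<Sum>n<N. (-1)^n * b n) + (-1)^N * b N - b 0) \<longlonglongrightarrow> 2 * S + 0 - b 0"
    using assms unfolding sums_def by (intro tendsto_intros t0)
  then show ?thesis unfolding sums_def alt_psum by simp
qed

lemma alt_bwd:
  fixes b :: "nat \<Rightarrow> complex"
  assumes "b \<longlonglongrightarrow> 0" "(\<lambda>n. (-1)^n * (b n - b (Suc n))) sums U"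
  shows "(\<lambda>n. (-1)^n * b n) sums ((U + b 0) / 2)"
proof -
  have t0: "(\<lambda>n. (-1)^n * b n) \<longlonglongrightarrow> 0"
  proof -
    have "(\<lambda>n. norm ((-1)^n * b n)) \<longlonglongrightarrow> 0"
      using assms(1) by (simp add: norm_mult norm_power tendsto_norm_zero)
    then show ?thesis using tendsto_norm_zero_iff by blast
  qed
  have eq: "(\<Sum>n<N. (-1)^n * b n) = ((\<Sum>n<N. (-1)^n * (b n - b (Suc n))) - (-1)^N * b N + b 0) / 2" for N
    unfolding alt_psum by simp
  have "(\<lambda>N. ((\<Sum>n<N. (-1)^n * (b n - b (Suc n))) - (-1)^N * b N + b 0) / 2) \<longlonglongrightarrow> (U - 0 + b 0) / 2"
    using assms(2) unfolding sums_def by (intro tendsto_intros t0) auto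
  then show ?thesis unfolding sums_def eq by simp
qed

definition ser :: "nat \<Rightarrow> real \<Rightarrow> complex \<Rightarrow> nat \<Rightarrow> complex" where
  "ser K q z n = (-1)^n * Dk K q (-z) (of_nat n)"

definition FK :: "nat \<Rightarrow> real \<Rightarrow> complex \<Rightarrow> complex" where
  "FK K q z = (\<Sum>k<K. Dk k q (-z) 0 / 2^(Suc k)) + suminf (ser K q z) / 2^K"

lemma Dk_Suc_nat: "Dk (Suc K) q s (of_nat n) = Dk K q s (of_nat n) - Dk K q s (of_nat (Suc n))"
  by (simp add: add.commute)

lemma FK_step:
  assumes "summable (ser K q z)"
  shows "summable (ser (Suc K) q z) \<and> FK (Suc K) q z = FK K q z"
proof -
  define b where "b n = Dk K q (-z) (of_nat n)" for n
  have "(\<lambda>n. (-1)^n * b n) sums suminf (ser K q z)"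
    using assms unfolding ser_def b_def by (simp add: summable_sums)
  from alt_fwd[OF this] have "ser (Suc K) q z sums (2 * suminf (ser K q z) - b 0)"
    unfolding ser_def b_def Dk_Suc_nat by simp
  then have s: "summable (ser (Suc K) q z)" "suminf (ser (Suc K) q z) = 2 * suminf (ser K q z) - b 0"
    by (auto simp: sums_iff)
  have "FK (Suc K) q z = (\<Sum>k<K. Dk k q (-z) 0 / 2^(Suc k)) + b 0 / 2^(Suc K) + (2 * suminf (ser K q z) - b 0) / 2^(Suc K)"
    unfolding FK_def s(2) by (simp add: b_def)
  also have "\<dots> = FK K q z" unfolding FK_def by (simp add: field_simps)
  finally show ?thesis using s by simp
qed

lemma FK_mono:
  assumes "summable (ser K q z)" "K \<le> K'"
  shows "summable (ser K' q z) \<and> FK K' q z = FK K q z"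
  using assms(2)
proof (induction K' rule: dec_induct)
  case base then show ?case using assms(1) by simp
next
  case (step m) then show ?case using FK_step[of m q z] by simp
qed

lemma Dk_tendsto0:
  assumes q: "q > 0" and z: "Re z > - real K"
  shows "(\<lambda>n. Dk K q (-z) (of_nat n)) \<longlonglongrightarrow> 0"
proof -
  obtain M where M: "M \<ge> 0" "\<And>s x. norm s \<le> norm z \<Longrightarrow> 0 \<le> x \<Longrightarrow> norm (Dk K q s (of_real x)) \<le> M * (x+q) powr (Re s - real K)"
    using Dk_bound[OF q, of "norm z" K] by blast
  have lim: "filterlim (\<lambda>n::nat. real n + q) at_top sequentially"
    using filterlim_tendsto_add_at_top[OF tendsto_const filterlim_real_sequentially, of q] by (simp add: add.commute)
  have "(\<lambda>n. (real n + q) powr (Re (-z) - real K)) \<longlonglongrightarrow> 0"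
    by (rule tendsto_neg_powr[OF _ lim]) (use z in simp)
  then have "(\<lambda>n. M * (real n + q) powr (Re (-z) - real K)) \<longlonglongrightarrow> M * 0"
    by (rule tendsto_mult_left)
  then have lim2: "(\<lambda>n. M * (real n + q) powr (Re (-z) - real K)) \<longlonglongrightarrow> 0" by simp
  have "norm (Dk K q (-z) (of_nat n)) \<le> M * (real n + q) powr (Re (-z) - real K)" for n
    using M(2)[of "-z" "real n"] by simp
  then show ?thesis by (intro Lim_null_comparison[OF _ lim2] always_eventually allI)
qed

lemma ser_local_bound:
  assumes q: "q > 0" and z0: "Re z0 > 1 - real K"
  shows "\<exists>d h. 0 < d \<and> summable h \<and> (\<forall>n. 0 \<le> h n) \<and> (\<forall>n\<ge>1. \<forall>y\<in>ball z0 d. norm (ser K q y n) \<le> h n)"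
proof -
  define d where "d = (Re z0 - 1 + real K) / 2"
  have d: "d > 0" using z0 by (simp add: d_def)
  obtain M where M: "M \<ge> 0" "\<And>s x. norm s \<le> norm z0 + d \<Longrightarrow> 0 \<le> x \<Longrightarrow> norm (Dk K q s (of_real x)) \<le> M * (x+q) powr (Re s - real K)"
    using Dk_bound[OF q, of "norm z0 + d" K] by blast
  define h where "h n = M * real n powr (-1 - d)" for n
  have "summable (\<lambda>n. real n powr (-1 - d))" using d by (subst summable_real_powr_iff) auto
  then have "summable h" unfolding h_def by (intro summable_mult)
  moreover have "\<forall>n\<ge>1. \<forall>y\<in>ball z0 d. norm (ser K q y n) \<le> h n"
  proof (intro allI impI ballI)
    fix n :: nat and y assume n: "n \<ge> 1" and y: "y \<in> ball z0 d"
    have dy: "norm (y - z0) < d" using y by (simp add: dist_norm norm_minus_commute)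
    have ny: "norm (-y) \<le> norm z0 + d" using dy norm_triangle_ineq2[of y z0] by simp
    have "Re (y - z0) \<ge> - norm (y - z0)" using abs_Re_le_cmod[of "y - z0"] by linarith
    then have "Re y - Re z0 \<ge> - norm (y - z0)" by simp
    then have ry: "Re y > 1 - real K + d" using dy d_def by (simp add: field_simps)
    have "norm (ser K q y n) = norm (Dk K q (-y) (of_real (real n)))" by (simp add: ser_def norm_mult norm_power)
    also have "\<dots> \<le> M * (real n + q) powr (Re (-y) - real K)" using M(2)[OF ny, of "real n"] by simp
    also have "\<dots> \<le> M * (real n + q) powr (-1 - d)"
      using ry n q M(1) by (intro mult_left_mono powr_mono) auto
    also have "\<dots> \<le> M * real n powr (-1 - d)"
      using n q M(1) d by (intro mult_left_mono powr_mono2') auto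
    finally show "norm (ser K q y n) \<le> h n" by (simp add: h_def)
  qed
  moreover have "\<forall>n. 0 \<le> h n" using M(1) by (simp add: h_def)
  ultimately show ?thesis using d by blast
qed

lemma ser_summable:
  assumes q: "q > 0" and z: "Re z > 1 - real K"
  shows "summable (ser K q z)"
proof -
  obtain d h where dh: "0 < d" "summable h" "\<forall>n\<ge>1. \<forall>y\<in>ball z d. norm (ser K q y n) \<le> h n"
    using ser_local_bound[OF q z] by blast
  show ?thesis
    by (rule summable_comparison_test'[OF dh(2), of 1]) (use dh in auto)
qed

lemma Dk_holo: "f holomorphic_on S \<Longrightarrow> (\<lambda>z. Dk K q (f z) w) holomorphic_on S"
proof (induction K arbitrary: w)
  case 0 then show ?case by (simp add: holomorphic_on_powr_right)
next
  case (Suc K) then show ?case by (simp add: holomorphic_on_diff)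
qed

lemma ser_holo:
  assumes q: "q > 0"
  shows "(\<lambda>z. suminf (ser K q z)) holomorphic_on {z. Re z > 1 - real K}"
proof -
  let ?S = "{z. Re z > 1 - real K}"
  have opS: "open ?S" by (simp add: open_halfspace_Re_gt)
  have hol: "(\<lambda>z. ser K q z n) holomorphic_on UNIV" for n
    unfolding ser_def by (intro holomorphic_intros Dk_holo)
  have "\<exists>g g'. \<forall>x \<in> ?S. ((\<lambda>n. ser K q x n) sums g x) \<and> ((\<lambda>n. deriv (\<lambda>z. ser K q z n) x) sums g' x) \<and> (g has_field_derivative g' x) (at x)"
  proof (rule series_and_derivative_comparison_complex[OF opS])
    show "((\<lambda>z. ser K q z n) has_field_derivative deriv (\<lambda>z. ser K q z n) x) (at x)" for n x
      using hol by (rule holomorphic_derivI) auto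
    show "\<exists>d h. 0 < d \<and> summable h \<and> range h \<subseteq> \<real>\<^sub>\<ge>\<^sub>0 \<and> (\<forall>\<^sub>F n in sequentially. \<forall>y\<in>ball x d \<inter> ?S. cmod (ser K q y n) \<le> cmod (h n))"
      if xS: "x \<in> ?S" for x
    proof -
      obtain d h where dh: "0 < d" "summable h" "\<forall>n. 0 \<le> h n" "\<forall>n\<ge>1. \<forall>y\<in>ball x d. norm (ser K q y n) \<le> h n"
      proof -
        have "Re x > 1 - real K" using xS by simp
        from ser_local_bound[OF q this] show ?thesis using that by auto
      qed
      show ?thesis
      proof (intro exI conjI)
        show "0 < d" by fact
        show "summable (\<lambda>n. complex_of_real (h n))" using dh(2) by (simp add: summable_of_real_iff)
        show "range (\<lambda>n. complex_of_real (h n)) \<subseteq> \<real>\<^sub>\<ge>\<^sub>0" using dh(3) by (auto simp: nonneg_Reals_def)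
        show "\<forall>\<^sub>F n in sequentially. \<forall>y\<in>ball x d \<inter> ?S. cmod (ser K q y n) \<le> cmod (complex_of_real (h n))"
          using dh(3,4) by (intro eventually_sequentiallyI[of 1]) auto
      qed
    qed
  qed
  then obtain g g' where gg: "\<And>x. x \<in> ?S \<Longrightarrow> (ser K q x sums g x) \<and> (g has_field_derivative g' x) (at x)"
    by blast
  have "g holomorphic_on ?S" using gg opS by (subst holomorphic_on_open) auto
  then show ?thesis
    by (rule holomorphic_transform) (use gg sums_unique in auto)
qed

lemma FK_holo:
  assumes q: "q > 0"
  shows "FK K q holomorphic_on {z. Re z > 1 - real K}"
  unfolding FK_def[abs_def]
  by (intro holomorphic_intros ser_holo[OF q] Dk_holo) auto

definition zf :: "real \<Rightarrow> complex \<Rightarrow> complex" where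
  "zf q z = FK (nat \<lceil>1 - Re z\<rceil> + 1) q z"

lemma zf_eq:
  assumes q: "q > 0" and z: "Re z > 1 - real K"
  shows "zf q z = FK K q z"
proof -
  define K0 where "K0 = nat \<lceil>1 - Re z\<rceil> + 1"
  have z0: "Re z > 1 - real K0" unfolding K0_def by linarith
  have "FK (max K K0) q z = FK K q z" using FK_mono[OF ser_summable[OF q z], of "max K K0"] by simp
  moreover have "FK (max K K0) q z = FK K0 q z" using FK_mono[OF ser_summable[OF q z0], of "max K K0"] by simp
  ultimately show ?thesis unfolding zf_def K0_def[symmetric] by simp
qed

lemma zf_holo:
  assumes q: "q > 0"
  shows "zf q holomorphic_on UNIV"
proof -
  have "zf q field_differentiable (at z)" for z
  proof -
    define K where "K = nat \<lceil>1 - Re z\<rceil> + 1"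
    have z: "z \<in> {z. Re z > 1 - real K}" unfolding K_def by simp linarith
    have "zf q holomorphic_on {z. Re z > 1 - real K}"
      by (rule holomorphic_transform[OF FK_holo[OF q]]) (use zf_eq[OF q] in auto)
    then show ?thesis using z by (intro holomorphic_on_imp_differentiable_at) (auto simp: open_halfspace_Re_gt)
  qed
  then show ?thesis by (auto simp: holomorphic_on_def field_differentiable_at_within)
qed

lemma zf_sums:
  assumes q: "q > 0" and w: "Re w > 0"
  shows "(\<lambda>n. (-1) ^ n / (complex_of_real (real n + q)) powr w) sums zf q w"
proof -
  define b where "b n = Dk 0 q (-w) (of_nat n)" for n
  have "b \<longlonglongrightarrow> 0" unfolding b_def using Dk_tendsto0[OF q, where K=0 and z=w] w by simp
  moreover have eq: "ser 1 q w = (\<lambda>n. (-1)^n * (b n - b (Suc n)))"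
    unfolding ser_def b_def One_nat_def Dk_Suc_nat by (rule refl)
  define U where "U = suminf (ser 1 q w)"
  have "summable (ser 1 q w)" using ser_summable[OF q, where K=1 and z=w] w by simp
  then have "ser 1 q w sums U" unfolding U_def by (rule summable_sums)
  then have "(\<lambda>n. (-1)^n * (b n - b (Suc n))) sums suminf (ser 1 q w)" unfolding eq U_def .
  ultimately have s1: "(\<lambda>n. (-1)^n * b n) sums ((suminf (ser 1 q w) + b 0) / 2)" by (rule alt_bwd)
  have zfw: "zf q w = (suminf (ser 1 q w) + b 0) / 2"
    using zf_eq[OF q, where K=1 and z=w] w by (simp add: FK_def b_def)
  have eqs: "(-1)^n * b n = (-1) ^ n / (complex_of_real (real n + q)) powr w" for n
    by (simp add: b_def powr_minus_divide)
  show ?thesis using s1 unfolding zfw[symmetric] eqs .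
qed

lemma zetaE_eq:
  assumes q: "q > 0"
  shows "zetaE z q = zf q z"
proof -
  let ?P = "\<lambda>f. f holomorphic_on UNIV \<and> (\<forall>w. Re w > 0 \<longrightarrow>
         (\<lambda>n. (-1) ^ n / (complex_of_real (real n + q)) powr w) sums f w)"
  have P: "?P (zf q)" using zf_holo[OF q] zf_sums[OF q] by blast
  have uniq: "g = zf q" if Pg: "?P g" for g
  proof
    fix x
    have hg: "g holomorphic_on UNIV" using Pg by blast
    show "g x = zf q x"
    proof (rule analytic_continuation_open[of "{w. Re w > 0}" UNIV g "zf q"])
      show "open {w. Re w > 0}" by (simp add: open_halfspace_Re_gt)
      show "{w. Re w > 0} \<noteq> {}" by (auto intro: exI[of _ 1])
      show "g z = zf q z" if zin: "z \<in> {w. Re w > 0}" for z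
      proof -
        have rz: "Re z > 0" using zin by simp
        have "(\<lambda>n. (-1) ^ n / (complex_of_real (real n + q)) powr z) sums g z"
          using Pg rz by blast
        moreover have "(\<lambda>n. (-1) ^ n / (complex_of_real (real n + q)) powr z) sums zf q z"
          by (rule zf_sums[OF q rz])
        ultimately show ?thesis by (rule sums_unique2)
      qed
      show "g holomorphic_on UNIV" by (rule hg)
      show "zf q holomorphic_on UNIV" by (rule zf_holo[OF q])
    qed auto
  qed
  have th: "(THE f. ?P f) = zf q" by (rule the_equality[where P = ?P, OF P uniq])
  show ?thesis unfolding zetaE_def th by (rule refl)
qed




definition pp :: "real \<Rightarrow> complex \<Rightarrow> real \<Rightarrow> complex" where
  "pp q z t = complex_of_real (t + q) powr (-z-1)"
definition gg :: "real \<Rightarrow> complex \<Rightarrow> real \<Rightarrow> complex" where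
  "gg q z t = complex_of_real (E0bar (-t)) / (complex_of_real (t + q)) powr (z + 1)"
definition cc :: "real \<Rightarrow> complex \<Rightarrow> nat \<Rightarrow> complex" where
  "cc q z n = integral {real n..real n + 1} (pp q z)"

lemma E0bar_piece:
  assumes "real n < t" "t < real n + 1"
  shows "E0bar (-t) = -((-1)^n)"
proof -
  have "\<lfloor>-t\<rfloor> = - int n - 1" using assms by (subst floor_eq_iff) auto
  then show ?thesis by (cases "even n") (simp_all add: E0bar_def)
qed

lemma norm_E0bar: "norm (complex_of_real (E0bar t)) = 1"
  by (simp add: E0bar_def)

lemma abs_E0bar: "\<bar>E0bar t\<bar> = 1"
  by (simp add: E0bar_def)

lemma gg_eq: "gg q z t = complex_of_real (E0bar (-t)) * pp q z t"
proof -
  have e: "-z-1 = -(z+1)" by simp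
  show ?thesis unfolding gg_def pp_def e powr_minus_divide by simp
qed

lemma Dk0_real: "Dk 0 q s (of_real t) = complex_of_real (t + q) powr s"
  by simp

lemma pp_vderiv:
  assumes "t > -q"
  shows "((\<lambda>t. complex_of_real (t + q) powr s) has_vector_derivative s * complex_of_real (t + q) powr (s - 1)) (at t within S)"
proof -
  have "Re (complex_of_real t) > -q" using assms by simp
  from has_vector_derivative_real_field[OF Dk_deriv[OF this, of 0 s]]
  show ?thesis by simp
qed

lemma pp_integrable:
  assumes "q > 0" "0 \<le> a"
  shows "pp q z integrable_on {a..b}"
proof (rule integrable_continuous_interval)
  show "continuous_on {a..b} (pp q z)" unfolding pp_def[abs_def]
    by (rule continuous_on_vector_derivative[OF pp_vderiv]) (use assms in auto)
qed

lemma pp_has_integral: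
  assumes "q > 0"
  shows "(pp q z has_integral cc q z n) {real n..real n + 1}"
  unfolding cc_def using pp_integrable[OF assms, of "real n"] by (simp add: integrable_integral)

lemma cc_nz:
  assumes q: "q > 0"
  shows "z * cc q z n = Dk 1 q (-z) (of_nat n)"
proof -
  have "((\<lambda>t. -z * pp q z t) has_integral
      (complex_of_real (real n + 1 + q) powr (-z) - complex_of_real (real n + q) powr (-z))) {real n..real n + 1}"
  proof -
    have "((\<lambda>t. (-z) * complex_of_real (t + q) powr (-z - 1)) has_integral
      (complex_of_real ((real n + 1) + q) powr (-z) - complex_of_real (real n + q) powr (-z))) {real n..real n + 1}"
    proof (rule fundamental_theorem_of_calculus)
      fix x assume x: "x \<in> {real n..real n + 1}"
      show "((\<lambda>t. complex_of_real (t + q) powr (-z)) has_vector_derivative (-z) * complex_of_real (x + q) powr (-z - 1)) (at x within {real n..real n + 1})"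
        using pp_vderiv[of q x "-z"] x q by simp
    qed simp
    then show ?thesis by (simp add: pp_def)
  qed
  moreover have "((\<lambda>t. -z * pp q z t) has_integral (-z * cc q z n)) {real n..real n + 1}"
    by (rule has_integral_mult_right[OF pp_has_integral[OF q]])
  ultimately have "-z * cc q z n = complex_of_real (real n + 1 + q) powr (-z) - complex_of_real (real n + q) powr (-z)"
    using has_integral_unique by blast
  then show ?thesis by (simp add: algebra_simps)
qed

lemma cc_zero:
  assumes q: "q > 0"
  shows "cc q 0 n = complex_of_real (ln (real n + 1 + q) - ln (real n + q))"
proof -
  have pp0: "pp q 0 t = complex_of_real (1 / (t + q))" if "t > -q" for t
  proof -
    have "pp q 0 t = complex_of_real (t + q) powr (complex_of_real (-1))" by (simp add: pp_def)
    also have "\<dots> = complex_of_real ((t + q) powr (-1))" using that by (subst powr_of_real) auto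
    also have "\<dots> = complex_of_real (1 / (t + q))" using that by (simp add: powr_minus_divide)
    finally show ?thesis .
  qed
  have ftc: "((\<lambda>t. complex_of_real (1 / (t + q))) has_integral
      (complex_of_real (ln ((real n + 1) + q)) - complex_of_real (ln (real n + q)))) {real n..real n + 1}"
  proof (rule fundamental_theorem_of_calculus)
    fix t assume t: "t \<in> {real n..real n + 1}"
    have "((\<lambda>t. ln (t + q)) has_real_derivative 1 / (t + q)) (at t within {real n..real n + 1})"
      using t q by (auto intro!: derivative_eq_intros)
    then show "((\<lambda>t. complex_of_real (ln (t + q))) has_vector_derivative complex_of_real (1 / (t + q))) (at t within {real n..real n + 1})"
      by (intro has_vector_derivative_of_real) 
  qed auto
  have "(pp q 0 has_integral (complex_of_real (ln ((real n + 1) + q)) - complex_of_real (ln (real n + q)))) {real n..real n + 1}"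
  proof (rule has_integral_spike_finite[where S = "{}", OF _ _ ftc])
    fix x assume "x \<in> {real n..real n + 1} - {}"
    then have "x > -q" using q by auto
    then show "pp q 0 x = complex_of_real (1 / (x + q))" by (rule pp0)
  qed simp
  then show ?thesis unfolding cc_def using integral_unique by (simp add: add_ac)
qed

lemma gg_piece:
  assumes q: "q > 0"
  shows "(gg q z has_integral (-((-1)^n) * cc q z n)) {real n..real n + 1}"
proof (rule has_integral_spike_finite[where S = "{real n, real n + 1}"])
  show "((\<lambda>t. -((-1)^n) * pp q z t) has_integral (-((-1)^n) * cc q z n)) {real n..real n + 1}"
    by (rule has_integral_mult_right[OF pp_has_integral[OF q]])
  fix t assume "t \<in> {real n..real n + 1} - {real n, real n + 1}"
  then have "real n < t" "t < real n + 1" by auto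
  then show "gg q z t = -((-1)^n) * pp q z t"
    unfolding gg_eq E0bar_piece[OF \<open>real n < t\<close> \<open>t < real n + 1\<close>] by simp
qed auto

lemma gg_upto:
  assumes q: "q > 0" and N: "\<alpha> \<le> N"
  shows "(gg q z has_integral (-(\<Sum>n\<in>{\<alpha>..<N}. (-1)^n * cc q z n))) {real \<alpha>..real N}"
  using N
proof (induction N rule: dec_induct)
  case base
  show ?case using has_integral_refl(1)[of "gg q z" "real \<alpha>"] by simp
next
  case (step m)
  have "(gg q z has_integral (-(\<Sum>n\<in>{\<alpha>..<m}. (-1)^n * cc q z n) + (-((-1)^m) * cc q z m))) {real \<alpha>..real m + 1}"
  proof (rule has_integral_combine[OF _ _ step.IH gg_piece[OF q]])
    show "real \<alpha> \<le> real m" using step.hyps by simp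
  qed simp
  then show ?case using step.hyps by (simp add: algebra_simps)
qed

lemma gg_integrable:
  assumes q: "q > 0"
  shows "gg q z integrable_on {real \<alpha>..T}"
proof -
  define N where "N = max \<alpha> (nat \<lceil>T\<rceil>)"
  have "gg q z integrable_on {real \<alpha>..real N}"
    using gg_upto[OF q, where \<alpha>=\<alpha> and N=N] unfolding N_def by (auto intro: has_integral_integrable)
  moreover have "{real \<alpha>..T} \<subseteq> {real \<alpha>..real N}" unfolding N_def
    by (auto simp: of_nat_max) linarith
  ultimately show ?thesis by (rule integrable_subinterval_real)
qed

lemma gg_tail:
  assumes q: "q > 0" and z: "Re z > -1" and T: "real N \<le> T" "T \<le> real N + 1"
  shows "norm (integral {real N..T} (gg q z)) \<le> (real N + q) powr (-Re z - 1)"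
proof -
  have "(gg q z has_integral integral {real N..T} (gg q z)) (cbox (real N) T)"
    using gg_integrable[OF q, where \<alpha>=N and T=T] by (simp add: integrable_integral)
  moreover have bnd: "norm (gg q z t) \<le> (real N + q) powr (-Re z - 1)" if t: "t \<in> cbox (real N) T" for t
  proof -
    from t have t1: "real N \<le> t" by auto
    have "norm (gg q z t) = norm (pp q z t)" unfolding gg_eq by (simp add: norm_mult norm_E0bar abs_E0bar)
    also have "\<dots> = (t + q) powr (-Re z - 1)" unfolding pp_def
      using t1 q by (subst norm_powr_real_powr) auto
    also have "\<dots> \<le> (real N + q) powr (-Re z - 1)"
      using t1 q z by (intro powr_mono2') auto
    finally show ?thesis .
  qed
  ultimately have hb: "norm (integral {real N..T} (gg q z)) \<le> (real N + q) powr (-Re z - 1) * Henstock_Kurzweil_Integration.content (cbox (real N) T)"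
    by (intro has_integral_bound[of "(real N + q) powr (-Re z - 1)" "gg q z"]) auto
  have "Henstock_Kurzweil_Integration.content (cbox (real N) T) = T - real N"
    using T by (simp add: content_real)
  then have "norm (integral {real N..T} (gg q z)) \<le> (real N + q) powr (-Re z - 1) * (T - real N)"
    using hb by simp
  also have "\<dots> \<le> (real N + q) powr (-Re z - 1) * 1"
    using T by (intro mult_left_mono) auto
  finally show ?thesis by simp
qed




lemma nat_floor_lim: "filterlim (\<lambda>T::real. nat \<lfloor>T\<rfloor>) sequentially at_top"
  by (rule filterlim_compose[OF filterlim_nat_sequentially filterlim_floor_sequentially])

lemma gg_lim:
  assumes q: "q > 0" and z: "Re z > -1" and C: "(\<lambda>n. (-1)^n * cc q z n) sums C"
  shows "((\<lambda>T. integral {real \<alpha>..T} (gg q z)) \<longlongrightarrow> -(C - (\<Sum>n<\<alpha>. (-1)^n * cc q z n))) at_top"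
proof -
  define L where "L = -(C - (\<Sum>n<\<alpha>. (-1)^n * cc q z n))"
  define Sq where "Sq N = integral {real \<alpha>..real N} (gg q z)" for N
  have Sq_eq: "Sq N = -((\<Sum>n<N. (-1)^n * cc q z n) - (\<Sum>n<\<alpha>. (-1)^n * cc q z n))" if N: "\<alpha> \<le> N" for N
  proof -
    have "Sq N = -(\<Sum>n\<in>{\<alpha>..<N}. (-1)^n * cc q z n)"
      unfolding Sq_def using gg_upto[OF q N, of z] by (simp add: integral_unique)
    also have "(\<Sum>n\<in>{\<alpha>..<N}. (-1)^n * cc q z n) = (\<Sum>n<N. (-1)^n * cc q z n) - (\<Sum>n<\<alpha>. (-1)^n * cc q z n)"
      using sum_diff_nat_ivl[of 0 \<alpha> N "\<lambda>n. (-1)^n * cc q z n"] N by (simp add: atLeast0LessThan)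
    finally show ?thesis .
  qed
  have "(\<lambda>N. -((\<Sum>n<N. (-1)^n * cc q z n) - (\<Sum>n<\<alpha>. (-1)^n * cc q z n))) \<longlonglongrightarrow> L"
    unfolding L_def using C unfolding sums_def by (intro tendsto_intros)
  then have Sq_lim: "Sq \<longlonglongrightarrow> L"
    by (rule Lim_transform_eventually) (use Sq_eq in \<open>auto intro: eventually_sequentiallyI[of \<alpha>]\<close>)
  have lim1: "((\<lambda>T::real. Sq (nat \<lfloor>T\<rfloor>)) \<longlongrightarrow> L) at_top"
    by (rule filterlim_compose[OF _ nat_floor_lim]) (rule Sq_lim)
  define h where "h n = (real n + q) powr (-Re z - 1)" for n
  have lim: "filterlim (\<lambda>n::nat. real n + q) at_top sequentially"
    using filterlim_tendsto_add_at_top[OF tendsto_const filterlim_real_sequentially, of q] by (simp add: add.commute)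
  have "h \<longlonglongrightarrow> 0" unfolding h_def by (rule tendsto_neg_powr[OF _ lim]) (use z in simp)
  then have hlim: "((\<lambda>T::real. h (nat \<lfloor>T\<rfloor>)) \<longlongrightarrow> 0) at_top"
    by (rule filterlim_compose[OF _ nat_floor_lim])
  have ev: "eventually (\<lambda>T. T \<ge> real \<alpha>) at_top" by (rule eventually_ge_at_top)
  have lim2: "((\<lambda>T. integral {real (nat \<lfloor>T\<rfloor>)..T} (gg q z)) \<longlongrightarrow> 0) at_top"
  proof (rule Lim_null_comparison[OF _ hlim])
    show "\<forall>\<^sub>F T in at_top. norm (integral {real (nat \<lfloor>T\<rfloor>)..T} (gg q z)) \<le> h (nat \<lfloor>T\<rfloor>)"
      using ev
    proof (rule eventually_mono)
      fix T :: real assume T: "T \<ge> real \<alpha>"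
      then have T0: "T \<ge> 0" by simp
      have "real (nat \<lfloor>T\<rfloor>) \<le> T" "T \<le> real (nat \<lfloor>T\<rfloor>) + 1" using T0 by linarith+
      from gg_tail[OF q z this] show "norm (integral {real (nat \<lfloor>T\<rfloor>)..T} (gg q z)) \<le> h (nat \<lfloor>T\<rfloor>)"
        by (simp add: h_def)
    qed
  qed
  have "((\<lambda>T. Sq (nat \<lfloor>T\<rfloor>) + integral {real (nat \<lfloor>T\<rfloor>)..T} (gg q z)) \<longlongrightarrow> L + 0) at_top"
    by (rule tendsto_add[OF lim1 lim2])
  then have "((\<lambda>T. Sq (nat \<lfloor>T\<rfloor>) + integral {real (nat \<lfloor>T\<rfloor>)..T} (gg q z)) \<longlongrightarrow> L) at_top" by simp
  moreover have "eventually (\<lambda>T. Sq (nat \<lfloor>T\<rfloor>) + integral {real (nat \<lfloor>T\<rfloor>)..T} (gg q z) = integral {real \<alpha>..T} (gg q z)) at_top"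
    using ev
  proof (rule eventually_mono)
    fix T :: real assume T: "T \<ge> real \<alpha>"
    then have T0: "T \<ge> 0" by simp
    have fl: "int \<alpha> \<le> \<lfloor>T\<rfloor>" using T by (simp add: le_floor_iff)
    then have "\<alpha> \<le> nat \<lfloor>T\<rfloor>" by (simp add: le_nat_iff)
    then have a1: "real \<alpha> \<le> real (nat \<lfloor>T\<rfloor>)" by simp
    have a2: "real (nat \<lfloor>T\<rfloor>) \<le> T" using T0 by linarith
    show "Sq (nat \<lfloor>T\<rfloor>) + integral {real (nat \<lfloor>T\<rfloor>)..T} (gg q z) = integral {real \<alpha>..T} (gg q z)"
      unfolding Sq_def by (rule Henstock_Kurzweil_Integration.integral_combine[OF a1 a2 gg_integrable[OF q]])
  qed
  ultimately show ?thesis unfolding L_def[symmetric] by (rule Lim_transform_eventually)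
qed

lemma ell_facts:
  assumes q: "q > 0"
  shows "summable (\<lambda>n. (-1)^n * (ln (real n + 1 + q) - ln (real n + q)))"
proof (rule summable_Leibniz'(1))
  define l where "l n = ln (real n + 1 + q) - ln (real n + q)" for n
  show "0 \<le> ln (real n + 1 + q) - ln (real n + q)" for n using q by simp
  show "ln (real (Suc n) + 1 + q) - ln (real (Suc n) + q) \<le> ln (real n + 1 + q) - ln (real n + q)" for n
  proof -
    define x where "x = real n + q"
    have x: "x > 0" using q by (simp add: x_def)
    have "(x + 2) * x \<le> (x + 1) * (x + 1)" by (simp add: algebra_simps)
    then have "ln ((x + 2) * x) \<le> ln ((x + 1) * (x + 1))" using x by simp
    then have "ln (x + 2) + ln x \<le> ln (x + 1) + ln (x + 1)" using x by (simp add: ln_mult)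
    then show ?thesis by (simp add: x_def algebra_simps)
  qed
  show "(\<lambda>n. ln (real n + 1 + q) - ln (real n + q)) \<longlonglongrightarrow> 0"
  proof (rule Lim_null_comparison)
    have lim: "filterlim (\<lambda>n::nat. real n + q) at_top sequentially"
      using filterlim_tendsto_add_at_top[OF tendsto_const filterlim_real_sequentially, of q] by (simp add: add.commute)
    show "(\<lambda>n. inverse (real n + q)) \<longlonglongrightarrow> 0" by (rule tendsto_inverse_0_at_top[OF lim])
    show "\<forall>\<^sub>F n in sequentially. norm (ln (real n + 1 + q) - ln (real n + q)) \<le> inverse (real n + q)"
    proof (intro always_eventually allI)
      fix n
      define x where "x = real n + q"
      have x: "x > 0" using q by (simp add: x_def)
      have "1 + inverse x = (x + 1) / x" using x by (simp add: field_simps)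
      then have "ln (x + 1) - ln x = ln (1 + inverse x)" using x by (simp add: ln_div)
      also have "\<dots> \<le> inverse x" using x by (intro ln_add_one_self_le_self) simp
      finally have "ln (x + 1) - ln x \<le> inverse x" .
      moreover have "ln (x + 1) - ln x \<ge> 0" using x by simp
      ultimately show "norm (ln (real n + 1 + q) - ln (real n + q)) \<le> inverse (real n + q)"
        by (simp add: x_def add_ac)
    qed
  qed
qed

lemma ser1_summable:
  assumes q: "q > 0" and z: "Re z > -1"
  shows "summable (ser 1 q z)"
proof -
  define b where "b n = Dk 1 q (-z) (of_nat n)" for n
  have "b \<longlonglongrightarrow> 0" unfolding b_def using Dk_tendsto0[OF q, where K=1 and z=z] z by simp
  moreover have eq: "ser 2 q z = (\<lambda>n. (-1)^n * (b n - b (Suc n)))"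
    unfolding ser_def b_def numeral_2_eq_2 One_nat_def Dk_Suc_nat by (rule refl)
  have "summable (ser 2 q z)" using ser_summable[OF q, where K=2 and z=z] z by simp
  then have "ser 2 q z sums suminf (ser 2 q z)" by (rule summable_sums)
  then have "(\<lambda>n. (-1)^n * (b n - b (Suc n))) sums suminf (ser 2 q z)" by (simp only: eq)
  ultimately have "(\<lambda>n. (-1)^n * b n) sums ((suminf (ser 2 q z) + b 0) / 2)" by (rule alt_bwd)
  then show ?thesis unfolding ser_def b_def by (auto intro: sums_summable)
qed

lemma main_L:
  assumes q: "q > 0" and z: "Re z > -1"
  shows "\<exists>L. ((\<lambda>T. integral {real \<alpha>..T} (gg q z)) \<longlongrightarrow> L) at_top \<and>
             z * L = -suminf (ser 1 q z) + (\<Sum>n<\<alpha>. ser 1 q z n)"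
proof (cases "z = 0")
  case True
  have c: "(-1)^n * cc q z n = complex_of_real ((-1)^n * (ln (real n + 1 + q) - ln (real n + q)))" for n
    using cc_zero[OF q, of n] True by simp
  have "summable (\<lambda>n. (-1)^n * cc q z n)"
    unfolding c by (subst summable_of_real_iff) (rule ell_facts[OF q])
  then obtain C where "(\<lambda>n. (-1)^n * cc q z n) sums C" by (auto simp: summable_def)
  from gg_lim[OF q z this, of \<alpha>] have lim: "((\<lambda>T. integral {real \<alpha>..T} (gg q z)) \<longlongrightarrow> -(C - (\<Sum>n<\<alpha>. (-1)^n * cc q z n))) at_top" .
  have ne: "w \<noteq> 0" if "Re w > 0" for w :: complex using that by auto
  have s0: "ser 1 q z n = 0" for n
  proof -
    have "complex_of_nat n + complex_of_real q \<noteq> 0" by (rule ne) (use q in simp)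
    moreover have "complex_of_nat n + 1 + complex_of_real q \<noteq> 0" by (rule ne) (use q in simp)
    ultimately show ?thesis using True by (simp add: ser_def One_nat_def add_ac)
  qed
  have sz: "ser 1 q z = (\<lambda>n. 0)" using s0 by (intro ext) simp
  show ?thesis unfolding sz using lim True by (intro exI[of _ "-(C - (\<Sum>n<\<alpha>. (-1)^n * cc q z n))"]) simp
next
  case False
  have c: "(-1)^n * cc q z n = ser 1 q z n / z" for n
  proof -
    have "z * cc q z n = Dk 1 q (-z) (of_nat n)" by (rule cc_nz[OF q])
    then have "cc q z n = Dk 1 q (-z) (of_nat n) / z" using False by (simp add: field_simps)
    then show ?thesis by (simp add: ser_def)
  qed
  define V where "V = suminf (ser 1 q z)"
  have "(\<lambda>n. (-1)^n * cc q z n) sums (V / z)"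
    unfolding c V_def using ser1_summable[OF q z] by (intro sums_divide summable_sums)
  from gg_lim[OF q z this, of \<alpha>] have lim: "((\<lambda>T. integral {real \<alpha>..T} (gg q z)) \<longlongrightarrow> -(V / z - (\<Sum>n<\<alpha>. (-1)^n * cc q z n))) at_top" .
  have sm: "(\<Sum>n<\<alpha>. (-1)^n * cc q z n) = (\<Sum>n<\<alpha>. ser 1 q z n) / z"
    unfolding c by (simp add: sum_divide_distrib)
  have "z * (-(V / z - (\<Sum>n<\<alpha>. (-1)^n * cc q z n))) = -V + (\<Sum>n<\<alpha>. ser 1 q z n)"
    unfolding sm using False by (simp add: right_diff_distrib)
  then show ?thesis using lim unfolding V_def by blast
qed




theorem proposition3p1:
  fixes q :: real and z :: complex and \<alpha> :: nat
  assumes "q > 0" and "Re z > -1"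
  shows "\<exists>L. ((\<lambda>T. integral {real \<alpha>..T}
              (\<lambda>t. complex_of_real (E0bar (-t)) / (complex_of_real (t + q)) powr (z + 1)))
            \<longlongrightarrow> L) at_top \<and>
         zetaE z q = (\<Sum>n=0..\<alpha>. (-1) ^ n / (complex_of_real (real n + q)) powr z)
            - 1/2 * ((-1) ^ \<alpha> / (complex_of_real (real \<alpha> + q)) powr z)
            - 1/2 * z * L"
proof -
  note q = assms(1) and zz = assms(2)
  obtain L where lim: "((\<lambda>T. integral {real \<alpha>..T} (gg q z)) \<longlongrightarrow> L) at_top"
    and zL: "z * L = -suminf (ser 1 q z) + (\<Sum>n<\<alpha>. ser 1 q z n)"
    using main_L[OF q zz] by blast
  define V where "V = suminf (ser 1 q z)"
  define a where "a n = Dk 0 q (-z) (of_nat n)" for n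
  have ser1: "ser 1 q z n = (-1)^n * (a n - a (Suc n))" for n
    unfolding ser_def a_def One_nat_def Dk_Suc_nat by (rule refl)
  have "zetaE z q = zf q z" by (rule zetaE_eq[OF q])
  also have "\<dots> = FK 2 q z" by (rule zf_eq[OF q]) (use zz in simp)
  also have "FK 2 q z = FK 1 q z"
    using FK_step[OF ser1_summable[OF q zz]] by (simp add: numeral_2_eq_2)
  also have "FK 1 q z = a 0 / 2 + V / 2"
    by (simp add: FK_def V_def a_def)
  finally have zeta: "zetaE z q = a 0 / 2 + V / 2" .
  have ps: "(\<Sum>n<\<alpha>. ser 1 q z n) = 2 * (\<Sum>n<\<alpha>. (-1)^n * a n) + (-1)^\<alpha> * a \<alpha> - a 0"
    unfolding ser1 by (rule alt_psum)
  have eqs: "(-1) ^ n / (complex_of_real (real n + q)) powr z = (-1)^n * a n" for n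
    by (simp add: a_def powr_minus_divide)
  have s0: "(\<Sum>n=0..\<alpha>. (-1) ^ n / (complex_of_real (real n + q)) powr z) = (\<Sum>n<\<alpha>. (-1)^n * a n) + (-1)^\<alpha> * a \<alpha>"
    unfolding eqs by (simp add: atLeast0AtMost lessThan_Suc_atMost[symmetric])
  have s0': "(\<Sum>n=0..\<alpha>. (-1)^n * a n) = (\<Sum>n<\<alpha>. (-1)^n * a n) + (-1)^\<alpha> * a \<alpha>"
    by (simp add: atLeast0AtMost lessThan_Suc_atMost[symmetric])
  have fq: "(\<lambda>t. complex_of_real (E0bar (-t)) / (complex_of_real (t + q)) powr (z + 1)) = gg q z"
    by (simp add: gg_def fun_eq_iff)
  show ?thesis
  proof (intro exI conjI)
    show "((\<lambda>T. integral {real \<alpha>..T}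
              (\<lambda>t. complex_of_real (E0bar (-t)) / (complex_of_real (t + q)) powr (z + 1))) \<longlongrightarrow> L) at_top"
      unfolding fq by (rule lim)
    have zL2: "z * L = -V + (2 * (\<Sum>n<\<alpha>. (-1)^n * a n) + (-1)^\<alpha> * a \<alpha> - a 0)"
      using zL ps unfolding V_def by simp
    have h: "1/2 * z * L = 1/2 * (-V + (2 * (\<Sum>n<\<alpha>. (-1)^n * a n) + (-1)^\<alpha> * a \<alpha> - a 0))"
      using zL2 by (metis mult.assoc)
    show "zetaE z q = (\<Sum>n=0..\<alpha>. (-1) ^ n / (complex_of_real (real n + q)) powr z)
            - 1/2 * ((-1) ^ \<alpha> / (complex_of_real (real \<alpha> + q)) powr z)
            - 1/2 * z * L"
      unfolding zeta eqs s0' h by (simp add: field_simps)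
  qed
qed


end
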